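(* Let $(a_n)_{n\ge0}$ be nonzero complex numbers with $|a_0|\ge|a_1|\ge\cdots$ and $\sum_n|a_n|^2<\infty$, let $T$ be the weighted shift $Te_n=a_ne_{n+1}$, and let $(c_k)_{k\ge1}$ be complex numbers. Then the sequence $p_n(T)=\sum_{k=1}^nc_kT^k$ converges in operator norm (to an element of $\mathcal A_T$) if and only if $\sum_{k=1}^\infty|c_k|^2|a_0a_1\cdots a_{k-1}|^2<\infty$.
   Context: $H$ is a complex Hilbert space with orthonormal basis $\{e_n\}_{n\ge0}$, $Te_n=a_ne_{n+1}$, and $\mathcal A_T$ is the operator-norm closure in $\mathcal B(H)$ of the polynomials $p(T)$ with $p(0)=0$. *)

theory Defs
  imports Complex_Main
begin

text \<open>Concrete model: H = l2(N) over the complex numbers, with orthonormal basis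
  e_n = indicator of n. Vectors are functions nat => complex; operators are
  functions on such vectors, only their action on l2 matters.\<close>

definition l2 :: "(nat \<Rightarrow> complex) set" where
  "l2 = {x. summable (\<lambda>n. (cmod (x n))\<^sup>2)}"

definition l2norm :: "(nat \<Rightarrow> complex) \<Rightarrow> real" where
  "l2norm x = sqrt (\<Sum>n. (cmod (x n))\<^sup>2)"

definition bounded_op :: "((nat \<Rightarrow> complex) \<Rightarrow> (nat \<Rightarrow> complex)) \<Rightarrow> bool" where
  "bounded_op A \<longleftrightarrow>
     (\<forall>x\<in>l2. A x \<in> l2) \<and>
     (\<forall>x\<in>l2. \<forall>y\<in>l2. A (\<lambda>n. x n + y n) = (\<lambda>n. A x n + A y n)) \<and>
     (\<forall>x\<in>l2. \<forall>c. A (\<lambda>n. c * x n) = (\<lambda>n. c * A x n)) \<and>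
     (\<exists>C. \<forall>x\<in>l2. l2norm (A x) \<le> C * l2norm x)"

definition opnorm :: "((nat \<Rightarrow> complex) \<Rightarrow> (nat \<Rightarrow> complex)) \<Rightarrow> real" where
  "opnorm A = (SUP x\<in>{x\<in>l2. l2norm x \<le> 1}. l2norm (A x))"

text \<open>Weighted shift: T e_n = a_n e_(n+1).\<close>
definition wshift :: "(nat \<Rightarrow> complex) \<Rightarrow> (nat \<Rightarrow> complex) \<Rightarrow> (nat \<Rightarrow> complex)" where
  "wshift a x = (\<lambda>m. if m = 0 then 0 else a (m - 1) * x (m - 1))"

definition poly_shift ::
  "(nat \<Rightarrow> complex) \<Rightarrow> (nat \<Rightarrow> complex) \<Rightarrow> nat \<Rightarrow> (nat \<Rightarrow> complex) \<Rightarrow> (nat \<Rightarrow> complex)" where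
  "poly_shift a c n x = (\<lambda>m. \<Sum>k=1..n. c k * (wshift a ^^ k) x m)"

end

theory Submission
  imports Defs "HOL-Analysis.Convex"
begin


definition W :: "(nat \<Rightarrow> complex) \<Rightarrow> nat \<Rightarrow> nat \<Rightarrow> complex" where
  "W a m k = (\<Prod>j<k. a (m + j))"

lemma wshift_app: "wshift a y n = (if n = 0 then 0 else a (n-1) * y (n-1))"
  by (simp add: wshift_def)

lemma wshift_pow:
  "(wshift a ^^ k) x n = (if k \<le> n then W a (n - k) k * x (n - k) else 0)"
proof (induction k arbitrary: n)
  case 0
  then show ?case by (simp add: W_def)
next
  case (Suc k)
  show ?case
  proof (cases "Suc k \<le> n")
    case True
    then have "n - 1 - k = n - Suc k" "n - Suc k + k = n - 1" by auto
    have "(wshift a ^^ Suc k) x n = wshift a ((wshift a ^^ k) x) n" by simp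
    also have "\<dots> = a (n - 1) * (W a (n - 1 - k) k * x (n - 1 - k))"
    proof -
      have "wshift a ((wshift a ^^ k) x) n = a (n-1) * (wshift a ^^ k) x (n-1)"
        by (subst wshift_app) (use True in simp)
      moreover have "(wshift a ^^ k) x (n-1) = W a (n - 1 - k) k * x (n - 1 - k)"
        using True by (subst Suc.IH) auto
      ultimately show ?thesis by simp
    qed
    also have "\<dots> = W a (n - Suc k) (Suc k) * x (n - Suc k)"
      using \<open>n - 1 - k = n - Suc k\<close> \<open>n - Suc k + k = n - 1\<close>
      by (simp add: W_def mult_ac)
    finally show ?thesis using True by simp
  next
    case False
    then show ?thesis using Suc by (auto simp: wshift_def)
  qed
qed

lemma l2_from_bound:
  assumes x: "x \<in> l2" and C: "C \<ge> 0"
    and b: "\<And>M. (\<Sum>m<M. (cmod (y m))\<^sup>2) \<le> C * (\<Sum>n. (cmod (x n))\<^sup>2)"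
  shows "y \<in> l2" "l2norm y \<le> sqrt C * l2norm x"
proof -
  have bb: "(\<Sum>m\<le>M. (cmod (y m))\<^sup>2) \<le> C * (\<Sum>n. (cmod (x n))\<^sup>2)" for M
    using b[of "Suc M"] by (simp add: lessThan_Suc_atMost)
  have s: "summable (\<lambda>m. (cmod (y m))\<^sup>2)"
    by (rule bounded_imp_summable[where B="C * (\<Sum>n. (cmod (x n))\<^sup>2)"])
       (use bb in auto)
  then show "y \<in> l2" by (simp add: l2_def)
  have "(\<Sum>m. (cmod (y m))\<^sup>2) \<le> C * (\<Sum>n. (cmod (x n))\<^sup>2)"
    by (rule suminf_le_const[OF s b])
  then have "l2norm y \<le> sqrt (C * (\<Sum>n. (cmod (x n))\<^sup>2))"
    unfolding l2norm_def by (rule real_sqrt_le_mono)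
  then show "l2norm y \<le> sqrt C * l2norm x"
    by (simp add: l2norm_def real_sqrt_mult)
qed

lemma l2_coord: "x \<in> l2 \<Longrightarrow> cmod (x m) \<le> l2norm x"
proof -
  assume "x \<in> l2"
  then have "(cmod (x m))\<^sup>2 \<le> (\<Sum>n. (cmod (x n))\<^sup>2)"
    using sum_le_suminf[of "\<lambda>n. (cmod (x n))\<^sup>2" "{m}"] by (auto simp: l2_def)
  then show ?thesis unfolding l2norm_def
    using real_sqrt_le_mono by fastforce
qed

lemma l2_partial: "x \<in> l2 \<Longrightarrow> (\<Sum>m<M. (cmod (x m))\<^sup>2) \<le> (l2norm x)\<^sup>2"
  unfolding l2norm_def l2_def
  by (simp add: sum_le_suminf suminf_nonneg)

lemma sum_conv_le:
  fixes f g :: "nat \<Rightarrow> real"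
  assumes "\<And>i. f i \<ge> 0" "\<And>i. g i \<ge> 0"
  shows "(\<Sum>n<M. \<Sum>k<n. f k * g (n - k)) \<le> (\<Sum>k<M. f k) * (\<Sum>i<M. g i)"
proof -
  have "(\<Sum>n<M. \<Sum>k<n. f k * g (n - k)) \<le> (\<Sum>n<M. \<Sum>k\<le>n. f k * g (n - k))"
    by (intro sum_mono sum_mono2) (auto intro: mult_nonneg_nonneg assms)
  also have "\<dots> = (\<Sum>(i,j)\<in>{(i,j). i+j < M}. f i * g j)"
    by (rule sum.triangle_reindex[symmetric])
  also have "\<dots> \<le> (\<Sum>(i,j)\<in>{..<M}\<times>{..<M}. f i * g j)"
    by (rule sum_mono2) (auto intro: mult_nonneg_nonneg assms)
  also have "\<dots> = (\<Sum>k<M. f k) * (\<Sum>i<M. g i)"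
    by (simp add: sum_product sum.cartesian_product)
  finally show ?thesis .
qed



definition AA :: "(nat \<Rightarrow> complex) \<Rightarrow> (nat \<Rightarrow> complex) \<Rightarrow> nat \<Rightarrow> real" where
  "AA a c k = cmod (c k) * cmod (\<Prod>j<k. a j)"

definition tlr :: "(nat \<Rightarrow> complex) \<Rightarrow> (nat \<Rightarrow> complex) \<Rightarrow> nat \<Rightarrow> real" where
  "tlr a c N = (\<Sum>i. (AA a c (i + Suc N))\<^sup>2)"

lemma antimono_a:
  assumes mono: "\<And>n. cmod (a (Suc n)) \<le> cmod (a n)" and "p \<le> q"
  shows "cmod (a q) \<le> cmod (a p)"
  using assms(2)
proof (induction q)
  case 0 then show ?case by simp
next
  case (Suc q)
  then show ?case using mono[of q] by (cases "p = Suc q") (auto simp: le_Suc_eq)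
qed

lemma W_bound:
  assumes mono: "\<And>n. cmod (a (Suc n)) \<le> cmod (a n)" and m: "1 \<le> m"
  shows "cmod (W a m k) * cmod (a 0) \<le> cmod (\<Prod>j<k. a j) * cmod (a k)"
proof -
  have "cmod (W a m k) = (\<Prod>j<k. cmod (a (m + j)))"
    by (simp add: W_def prod_norm)
  also have "\<dots> \<le> (\<Prod>j<k. cmod (a (Suc j)))"
    by (rule prod_mono) (use m in \<open>auto intro!: antimono_a[where a=a, OF mono]\<close>)
  finally have 1: "cmod (W a m k) \<le> (\<Prod>j<k. cmod (a (Suc j)))" .
  have "cmod (\<Prod>j<k. a j) * cmod (a k) = (\<Prod>j<Suc k. cmod (a j))"
    by (simp add: prod_norm norm_mult)
  also have "\<dots> = cmod (a 0) * (\<Prod>j<k. cmod (a (Suc j)))"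
    by (rule prod.lessThan_Suc_shift)
  finally show ?thesis using 1
    by (simp add: mult.commute mult_left_mono)
qed

lemma tail_bound:
  assumes s: "summable (\<lambda>k. (AA a c (Suc k))\<^sup>2)" and F: "finite F" "F \<subseteq> {N<..}"
  shows "(\<Sum>k\<in>F. (AA a c k)\<^sup>2) \<le> tlr a c N"
proof -
  have inj: "inj_on (\<lambda>k. k - Suc N) F" proof (rule inj_onI)
    fix x y assume "x \<in> F" "y \<in> F" "x - Suc N = y - Suc N"
    moreover have "x > N" "y > N" using F \<open>x \<in> F\<close> \<open>y \<in> F\<close> by auto
    ultimately show "x = y" by linarith
  qed
  have "(\<Sum>k\<in>F. (AA a c k)\<^sup>2) = (\<Sum>i\<in>(\<lambda>k. k - Suc N) ` F. (AA a c (i + Suc N))\<^sup>2)"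
    by (subst sum.reindex[OF inj]) (use F in \<open>auto intro!: sum.cong\<close>)
  also have "\<dots> \<le> tlr a c N" unfolding tlr_def
  proof (rule sum_le_suminf)
    have "summable (\<lambda>k. (AA a c k)\<^sup>2)" using s summable_Suc_iff by blast
    then show "summable (\<lambda>i. (AA a c (i + Suc N))\<^sup>2)"
      by (rule summable_ignore_initial_segment)
  qed (use F in auto)
  finally show ?thesis .
qed

lemma tlr_nonneg:
  assumes s: "summable (\<lambda>k. (AA a c (Suc k))\<^sup>2)"
  shows "0 \<le> tlr a c N"
  using tail_bound[OF s, of "{}" N] by simp



lemma diff_le:
  "cmod (poly_shift a c N x n - poly_shift a c n x n)
     \<le> (\<Sum>k\<in>{N<..n}. cmod (c k * (wshift a ^^ k) x n))"
proof (cases "N \<le> n")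
  case True
  have U: "{1..n} = {1..N} \<union> {N<..n}" using True by auto
  have "poly_shift a c n x n = poly_shift a c N x n + (\<Sum>k\<in>{N<..n}. c k * (wshift a ^^ k) x n)"
    unfolding poly_shift_def U by (subst sum.union_disjoint) auto
  then have "poly_shift a c N x n - poly_shift a c n x n = - (\<Sum>k\<in>{N<..n}. c k * (wshift a ^^ k) x n)"
    by simp
  then show ?thesis by (simp only: norm_minus_cancel norm_sum)
next
  case False
  have U: "{1..N} = {1..n} \<union> {n<..N}" using False by auto
  have z: "(\<Sum>k\<in>{n<..N}. c k * (wshift a ^^ k) x n) = 0"
    by (rule sum.neutral) (auto simp: wshift_pow)
  have "poly_shift a c N x n = poly_shift a c n x n + (\<Sum>k\<in>{n<..N}. c k * (wshift a ^^ k) x n)"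
    unfolding poly_shift_def U by (subst sum.union_disjoint) auto
  then show ?thesis using z False by simp
qed

lemma coord_bound:
  assumes nz: "\<And>n. a n \<noteq> 0"
    and mono: "\<And>n. cmod (a (Suc n)) \<le> cmod (a n)"
    and s: "summable (\<lambda>k. (AA a c (Suc k))\<^sup>2)"
  shows "(cmod (poly_shift a c N x n - poly_shift a c n x n))\<^sup>2
     \<le> 2 * ((if N < n then (AA a c n)\<^sup>2 else 0) * (cmod (x 0))\<^sup>2)
       + 2 * tlr a c N * ((\<Sum>k<n. (cmod (a k))\<^sup>2 * (cmod (x (n - k)))\<^sup>2) / (cmod (a 0))\<^sup>2)"
proof (cases "N < n")
  case False
  then have "{N<..n} = {}" by auto
  then have "cmod (poly_shift a c N x n - poly_shift a c n x n) \<le> 0"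
    using diff_le[of a c N x n] by simp
  then have "(cmod (poly_shift a c N x n - poly_shift a c n x n))\<^sup>2 = 0" by simp
  moreover have "0 \<le> 2 * tlr a c N * ((\<Sum>k<n. (cmod (a k))\<^sup>2 * (cmod (x (n - k)))\<^sup>2) / (cmod (a 0))\<^sup>2)"
    using tlr_nonneg[OF s] by (intro mult_nonneg_nonneg divide_nonneg_nonneg sum_nonneg) auto
  ultimately show ?thesis using False by simp
next
  case True
  define B where "B k = cmod (a k) / cmod (a 0) * cmod (x (n - k))" for k
  have a0: "cmod (a 0) > 0" using nz by simp
  have I: "{N<..n} = insert n {N<..<n}" using True by auto
  have t1: "cmod (c n * (wshift a ^^ n) x n) = AA a c n * cmod (x 0)"
    by (simp add: wshift_pow AA_def W_def norm_mult)
  have t2: "cmod (c k * (wshift a ^^ k) x n) \<le> AA a c k * B k" if k: "k \<in> {N<..<n}" for k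
  proof -
    have "cmod (W a (n - k) k) * cmod (a 0) \<le> cmod (\<Prod>j<k. a j) * cmod (a k)"
      by (rule W_bound[where a=a, OF mono]) (use k in auto)
    then have w: "cmod (W a (n - k) k) \<le> cmod (\<Prod>j<k. a j) * (cmod (a k) / cmod (a 0))"
      using a0 by (simp add: field_simps)
    have "cmod (c k * (wshift a ^^ k) x n) = cmod (c k) * cmod (W a (n - k) k) * cmod (x (n - k))"
      using k by (simp add: wshift_pow norm_mult)
    also have "\<dots> \<le> cmod (c k) * (cmod (\<Prod>j<k. a j) * (cmod (a k) / cmod (a 0))) * cmod (x (n - k))"
      by (intro mult_right_mono mult_left_mono w) auto
    also have "\<dots> = AA a c k * B k" by (simp add: AA_def B_def)
    finally show ?thesis .
  qed
  define u where "u = AA a c n * cmod (x 0)"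
  define v where "v = (\<Sum>k\<in>{N<..<n}. AA a c k * B k)"
  have "cmod (poly_shift a c N x n - poly_shift a c n x n) \<le> u + v"
  proof -
    have "(\<Sum>k\<in>{N<..<n}. cmod (c k * (wshift a ^^ k) x n)) \<le> v"
      unfolding v_def by (intro sum_mono t2)
    then show ?thesis
      using diff_le[of a c N x n] unfolding I u_def by (simp add: t1)
  qed
  moreover have "0 \<le> cmod (poly_shift a c N x n - poly_shift a c n x n)" by simp
  ultimately have "(cmod (poly_shift a c N x n - poly_shift a c n x n))\<^sup>2 \<le> (u + v)\<^sup>2"
    by (rule power_mono)
  also have "\<dots> \<le> 2 * u\<^sup>2 + 2 * v\<^sup>2"
  proof -
    have "0 \<le> (u - v)\<^sup>2" by simp
    then show ?thesis unfolding power2_sum power2_diff by linarith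
  qed
  finally have L: "(cmod (poly_shift a c N x n - poly_shift a c n x n))\<^sup>2 \<le> 2 * u\<^sup>2 + 2 * v\<^sup>2" .
  have "v\<^sup>2 \<le> (\<Sum>k\<in>{N<..<n}. (AA a c k)\<^sup>2) * (\<Sum>k\<in>{N<..<n}. (B k)\<^sup>2)"
    unfolding v_def by (rule Cauchy_Schwarz_ineq_sum)
  also have "\<dots> \<le> tlr a c N * (\<Sum>k<n. (B k)\<^sup>2)"
  proof (rule mult_mono)
    show "(\<Sum>k\<in>{N<..<n}. (AA a c k)\<^sup>2) \<le> tlr a c N" by (rule tail_bound[OF s]) auto
    show "(\<Sum>k\<in>{N<..<n}. (B k)\<^sup>2) \<le> (\<Sum>k<n. (B k)\<^sup>2)" by (rule sum_mono2) auto
    show "0 \<le> tlr a c N" by (rule tlr_nonneg[OF s])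
    show "0 \<le> (\<Sum>k\<in>{N<..<n}. (B k)\<^sup>2)" by (rule sum_nonneg) simp
  qed
  also have "(\<Sum>k<n. (B k)\<^sup>2) = (\<Sum>k<n. (cmod (a k))\<^sup>2 * (cmod (x (n - k)))\<^sup>2) / (cmod (a 0))\<^sup>2"
    by (simp add: B_def sum_divide_distrib power_mult_distrib power_divide)
  finally have V: "v\<^sup>2 \<le> tlr a c N * ((\<Sum>k<n. (cmod (a k))\<^sup>2 * (cmod (x (n - k)))\<^sup>2) / (cmod (a 0))\<^sup>2)" .
  have U2: "u\<^sup>2 = (if N < n then (AA a c n)\<^sup>2 else 0) * (cmod (x 0))\<^sup>2"
    using True by (simp add: u_def power_mult_distrib)
  show ?thesis using L V U2 by linarith
qed



definition KK :: "(nat \<Rightarrow> complex) \<Rightarrow> real" where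
  "KK a = 2 + 2 * (\<Sum>n. (cmod (a n))\<^sup>2) / (cmod (a 0))\<^sup>2"

lemma KK_nonneg: "summable (\<lambda>n. (cmod (a n))\<^sup>2) \<Longrightarrow> 0 \<le> KK a"
  unfolding KK_def by (intro add_nonneg_nonneg divide_nonneg_nonneg mult_nonneg_nonneg suminf_nonneg) auto

lemma diff_partial:
  assumes nz: "\<And>n. a n \<noteq> 0"
    and mono: "\<And>n. cmod (a (Suc n)) \<le> cmod (a n)"
    and sq: "summable (\<lambda>n. (cmod (a n))\<^sup>2)"
    and s: "summable (\<lambda>k. (AA a c (Suc k))\<^sup>2)"
    and x: "x \<in> l2"
  shows "(\<Sum>n<M. (cmod (poly_shift a c N x n - poly_shift a c n x n))\<^sup>2)
           \<le> KK a * tlr a c N * (\<Sum>n. (cmod (x n))\<^sup>2)"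
proof -
  define X where "X = (\<Sum>n. (cmod (x n))\<^sup>2)"
  define S where "S = (\<Sum>n. (cmod (a n))\<^sup>2)"
  define T where "T = tlr a c N"
  define P1 where "P1 = (\<Sum>n<M. (if N < n then (AA a c n)\<^sup>2 else 0))"
  define P2 where "P2 = (\<Sum>n<M. \<Sum>k<n. (cmod (a k))\<^sup>2 * (cmod (x (n - k)))\<^sup>2)"
  have xs: "summable (\<lambda>n. (cmod (x n))\<^sup>2)" using x by (simp add: l2_def)
  have T0: "0 \<le> T" unfolding T_def by (rule tlr_nonneg[OF s])
  have a0: "(cmod (a 0))\<^sup>2 > 0" using nz by simp
  have "(\<Sum>n<M. (cmod (poly_shift a c N x n - poly_shift a c n x n))\<^sup>2)
     \<le> (\<Sum>n<M. 2 * ((if N < n then (AA a c n)\<^sup>2 else 0) * (cmod (x 0))\<^sup>2)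
       + 2 * T * ((\<Sum>k<n. (cmod (a k))\<^sup>2 * (cmod (x (n - k)))\<^sup>2) / (cmod (a 0))\<^sup>2))"
    unfolding T_def by (rule sum_mono, rule coord_bound[OF nz mono s])
  also have "\<dots> = 2 * (cmod (x 0))\<^sup>2 * P1 + 2 * T * P2 / (cmod (a 0))\<^sup>2"
    by (simp add: P1_def P2_def sum.distrib sum_distrib_left sum_divide_distrib
        sum_distrib_right mult_ac)
  also have "\<dots> \<le> 2 * X * T + 2 * T * (S * X) / (cmod (a 0))\<^sup>2"
  proof -
    have x0: "(cmod (x 0))\<^sup>2 \<le> X" unfolding X_def
      using sum_le_suminf[OF xs, of "{0}"] by simp
    have "P1 = (\<Sum>n\<in>{n\<in>{..<M}. N < n}. (AA a c n)\<^sup>2)"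
      unfolding P1_def by (rule sum.inter_filter[symmetric]) simp
    also have "\<dots> \<le> T" unfolding T_def by (rule tail_bound[OF s]) auto
    finally have p1: "P1 \<le> T" .
    have "P2 \<le> (\<Sum>k<M. (cmod (a k))\<^sup>2) * (\<Sum>i<M. (cmod (x i))\<^sup>2)"
      unfolding P2_def by (rule sum_conv_le) auto
    also have "\<dots> \<le> S * X" unfolding S_def X_def
      by (intro mult_mono sum_le_suminf sq xs suminf_nonneg sum_nonneg) auto
    finally have p2: "P2 \<le> S * X" .
    have X0: "0 \<le> X" unfolding X_def by (rule suminf_nonneg[OF xs]) simp
    have P10: "0 \<le> P1" unfolding P1_def by (rule sum_nonneg) simp
    have "(cmod (x 0))\<^sup>2 * P1 \<le> X * T" by (rule mult_mono[OF x0 p1 X0 P10])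
    moreover have "T * P2 \<le> T * (S * X)" by (rule mult_left_mono[OF p2 T0])
    then have "2 * T * P2 / (cmod (a 0))\<^sup>2 \<le> 2 * T * (S * X) / (cmod (a 0))\<^sup>2"
      using a0 by (intro divide_right_mono) auto
    ultimately show ?thesis by linarith
  qed
  also have "\<dots> = KK a * T * X"
    using a0 by (simp add: KK_def S_def field_simps)
  finally show ?thesis by (simp add: T_def X_def)
qed

lemma diff_l2:
  assumes nz: "\<And>n. a n \<noteq> 0"
    and mono: "\<And>n. cmod (a (Suc n)) \<le> cmod (a n)"
    and sq: "summable (\<lambda>n. (cmod (a n))\<^sup>2)"
    and s: "summable (\<lambda>k. (AA a c (Suc k))\<^sup>2)"
    and x: "x \<in> l2"
  shows "(\<lambda>n. poly_shift a c N x n - poly_shift a c n x n) \<in> l2"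
        "l2norm (\<lambda>n. poly_shift a c N x n - poly_shift a c n x n) \<le> sqrt (KK a * tlr a c N) * l2norm x"
  using l2_from_bound[OF x _ diff_partial[OF nz mono sq s x]]
    mult_nonneg_nonneg[OF KK_nonneg[OF sq] tlr_nonneg[OF s]] by auto



lemma l2_from_bound':
  assumes b: "\<And>M. (\<Sum>m<M. (cmod (y m))\<^sup>2) \<le> B"
  shows "y \<in> l2" "l2norm y \<le> sqrt B"
proof -
  have bb: "(\<Sum>m\<le>M. (cmod (y m))\<^sup>2) \<le> B" for M
    using b[of "Suc M"] by (simp add: lessThan_Suc_atMost)
  have s: "summable (\<lambda>m. (cmod (y m))\<^sup>2)"
    by (rule bounded_imp_summable[where B=B]) (use bb in auto)
  then show "y \<in> l2" by (simp add: l2_def)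
  show "l2norm y \<le> sqrt B"
    unfolding l2norm_def by (rule real_sqrt_le_mono, rule suminf_le_const[OF s b])
qed

lemma l2norm_nonneg: "x \<in> l2 \<Longrightarrow> 0 \<le> l2norm x"
  by (simp add: l2norm_def l2_def suminf_nonneg)

lemma l2_diff:
  assumes "y \<in> l2" "z \<in> l2"
  shows "(\<lambda>m. y m - z m) \<in> l2" "l2norm (\<lambda>m. y m - z m) \<le> sqrt (2 * (l2norm y)\<^sup>2 + 2 * (l2norm z)\<^sup>2)"
proof -
  have "(\<Sum>m<M. (cmod (y m - z m))\<^sup>2) \<le> 2 * (l2norm y)\<^sup>2 + 2 * (l2norm z)\<^sup>2" for M
  proof -
    have p: "(cmod (y m - z m))\<^sup>2 \<le> 2 * (cmod (y m))\<^sup>2 + 2 * (cmod (z m))\<^sup>2" for m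
    proof -
      have "cmod (y m - z m) \<le> cmod (y m) + cmod (z m)" by (rule norm_triangle_ineq4)
      then have "(cmod (y m - z m))\<^sup>2 \<le> (cmod (y m) + cmod (z m))\<^sup>2"
        by (rule power_mono) simp
      moreover have "0 \<le> (cmod (y m) - cmod (z m))\<^sup>2" by simp
      ultimately show ?thesis unfolding power2_sum power2_diff by linarith
    qed
    have "(\<Sum>m<M. (cmod (y m - z m))\<^sup>2) \<le> (\<Sum>m<M. 2 * (cmod (y m))\<^sup>2 + 2 * (cmod (z m))\<^sup>2)"
      by (rule sum_mono, rule p)
    also have "\<dots> = 2 * (\<Sum>m<M. (cmod (y m))\<^sup>2) + 2 * (\<Sum>m<M. (cmod (z m))\<^sup>2)"
      by (simp add: sum.distrib sum_distrib_left)
    also have "\<dots> \<le> 2 * (l2norm y)\<^sup>2 + 2 * (l2norm z)\<^sup>2"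
      using l2_partial[OF assms(1), of M] l2_partial[OF assms(2), of M] by linarith
    finally show ?thesis .
  qed
  then show "(\<lambda>m. y m - z m) \<in> l2" "l2norm (\<lambda>m. y m - z m) \<le> sqrt (2 * (l2norm y)\<^sup>2 + 2 * (l2norm z)\<^sup>2)"
    using l2_from_bound'[of "\<lambda>m. y m - z m"] by auto
qed

lemma poly_shift_0: "poly_shift a c 0 x = (\<lambda>n. 0)"
  by (simp add: poly_shift_def)

lemma LB:
  assumes nz: "\<And>n. a n \<noteq> 0"
    and mono: "\<And>n. cmod (a (Suc n)) \<le> cmod (a n)"
    and sq: "summable (\<lambda>n. (cmod (a n))\<^sup>2)"
    and s: "summable (\<lambda>k. (AA a c (Suc k))\<^sup>2)"
    and x: "x \<in> l2"
  shows "(\<lambda>n. poly_shift a c n x n) \<in> l2"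
        "l2norm (\<lambda>n. poly_shift a c n x n) \<le> sqrt (KK a * tlr a c 0) * l2norm x"
proof -
  have e1: "(\<lambda>n. poly_shift a c 0 x n - poly_shift a c n x n) \<in> l2"
   and e2: "l2norm (\<lambda>n. poly_shift a c 0 x n - poly_shift a c n x n) \<le> sqrt (KK a * tlr a c 0) * l2norm x"
    using diff_l2[OF nz mono sq s x, of 0] by auto
  show "(\<lambda>n. poly_shift a c n x n) \<in> l2" using e1 by (simp add: poly_shift_0 l2_def)
  show "l2norm (\<lambda>n. poly_shift a c n x n) \<le> sqrt (KK a * tlr a c 0) * l2norm x"
    using e2 by (simp add: poly_shift_0 l2norm_def)
qed

lemma wpow_add: "(wshift a ^^ k) (\<lambda>n. x n + y n) m = (wshift a ^^ k) x m + (wshift a ^^ k) y m"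
  by (simp add: wshift_pow distrib_left)

lemma wpow_scale: "(wshift a ^^ k) (\<lambda>n. d * x n) m = d * (wshift a ^^ k) x m"
  by (simp add: wshift_pow mult_ac)

lemma tlr_lim:
  assumes s: "summable (\<lambda>k. (AA a c (Suc k))\<^sup>2)"
  shows "(\<lambda>N. tlr a c N) \<longlonglongrightarrow> 0"
proof -
  have "summable (\<lambda>k. (AA a c k)\<^sup>2)" using s summable_Suc_iff by blast
  then have "(\<lambda>n. (\<Sum>k. (AA a c (k + n))\<^sup>2)) \<longlonglongrightarrow> 0"
    by (intro LIMSEQ_I) (use suminf_exist_split in \<open>fastforce simp: real_norm_def\<close>)
  from LIMSEQ_Suc[OF this] show ?thesis by (simp add: tlr_def)
qed



lemma opnorm_le:
  assumes "\<And>x. x \<in> l2 \<Longrightarrow> l2norm x \<le> 1 \<Longrightarrow> l2norm (A x) \<le> B"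
  shows "opnorm A \<le> B"
  unfolding opnorm_def
proof (rule cSUP_least)
  have "(\<lambda>n. 0) \<in> l2" by (simp add: l2_def)
  moreover have "l2norm (\<lambda>n. 0) \<le> 1" by (simp add: l2norm_def)
  ultimately show "{x \<in> l2. l2norm x \<le> 1} \<noteq> {}" by blast
qed (use assms in auto)

lemma opnorm_ge:
  assumes "\<And>x. x \<in> l2 \<Longrightarrow> l2norm x \<le> 1 \<Longrightarrow> l2norm (A x) \<le> B"
    and "y \<in> l2" "l2norm y \<le> 1"
  shows "l2norm (A y) \<le> opnorm A"
  unfolding opnorm_def
  by (rule cSUP_upper) (use assms in \<open>auto intro!: bdd_aboveI2\<close>)

lemma p_e0:
  "poly_shift a c n (\<lambda>m. if m = 0 then 1 else 0) m = (if 1 \<le> m \<and> m \<le> n then c m * (\<Prod>j<m. a j) else 0)"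
proof -
  have "poly_shift a c n (\<lambda>m. if m = 0 then 1 else 0) m = (\<Sum>k\<in>{1..n}. if k = m then c m * (\<Prod>j<m. a j) else 0)"
    unfolding poly_shift_def by (rule sum.cong) (auto simp: wshift_pow W_def)
  also have "\<dots> = (if 1 \<le> m \<and> m \<le> n then c m * (\<Prod>j<m. a j) else 0)"
    by (subst sum.delta) auto
  finally show ?thesis .
qed

lemma p_trunc:
  "poly_shift a c n x m = poly_shift a (\<lambda>k. if k \<le> n then c k else 0) m x m"
proof -
  have "poly_shift a c n x m = (\<Sum>k\<in>{1..min n m}. c k * (wshift a ^^ k) x m)"
    unfolding poly_shift_def by (rule sum.mono_neutral_right) (auto simp: wshift_pow)
  also have "\<dots> = (\<Sum>k\<in>{1..min n m}. (if k \<le> n then c k else 0) * (wshift a ^^ k) x m)"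
    by (rule sum.cong) auto
  also have "\<dots> = poly_shift a (\<lambda>k. if k \<le> n then c k else 0) m x m"
    unfolding poly_shift_def by (rule sum.mono_neutral_left) auto
  finally show ?thesis .
qed



theorem mainTheorem10:
  fixes a c :: "nat \<Rightarrow> complex"
  assumes nz: "\<And>n. a n \<noteq> 0"
    and mono: "\<And>n. cmod (a (Suc n)) \<le> cmod (a n)"
    and sq: "summable (\<lambda>n. (cmod (a n))\<^sup>2)"
  shows "(\<exists>L. bounded_op L \<and>
            (\<lambda>n. opnorm (\<lambda>x. (\<lambda>m. poly_shift a c n x m - L x m))) \<longlonglongrightarrow> 0)
         \<longleftrightarrow> summable (\<lambda>k. (cmod (c (Suc k)))\<^sup>2 * (cmod (\<Prod>j\<le>k. a j))\<^sup>2)"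
proof
  assume "\<exists>L. bounded_op L \<and> (\<lambda>n. opnorm (\<lambda>x. (\<lambda>m. poly_shift a c n x m - L x m))) \<longlonglongrightarrow> 0"
  then obtain L where bL: "bounded_op L"
    and lim: "(\<lambda>n. opnorm (\<lambda>x. (\<lambda>m. poly_shift a c n x m - L x m))) \<longlonglongrightarrow> 0" by blast
  have Ll2: "\<And>x. x \<in> l2 \<Longrightarrow> L x \<in> l2" using bL by (simp add: bounded_op_def)
  obtain C where C: "\<And>x. x \<in> l2 \<Longrightarrow> l2norm (L x) \<le> C * l2norm x"
    using bL unfolding bounded_op_def by blast
  define e0 :: "nat \<Rightarrow> complex" where "e0 = (\<lambda>m. if m = 0 then 1 else 0)"
  have e0sq: "(\<lambda>m. (cmod (e0 m))\<^sup>2) = (\<lambda>m. if m = 0 then 1 else 0)"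
    by (auto simp: e0_def)
  have e0l2: "e0 \<in> l2" unfolding l2_def using e0sq sums_single[of 0 "\<lambda>_. 1::real"]
    by (auto simp: sums_iff)
  have e0n: "l2norm e0 = 1" unfolding l2norm_def e0sq
    using sums_single[of 0 "\<lambda>_. 1::real"] by (simp add: sums_iff)
  have bnd: "\<exists>B. \<forall>x. x \<in> l2 \<longrightarrow> l2norm x \<le> 1 \<longrightarrow> l2norm (\<lambda>m. poly_shift a c n x m - L x m) \<le> B" for n
  proof -
    define c' where "c' = (\<lambda>k. if k \<le> n then c k else 0)"
    have s': "summable (\<lambda>k. (AA a c' (Suc k))\<^sup>2)"
      by (rule summable_finite[of "{..n}"]) (auto simp: AA_def c'_def)
    define C1 where "C1 = sqrt (KK a * tlr a c' 0)"
    have C10: "0 \<le> C1" unfolding C1_def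
      using mult_nonneg_nonneg[OF KK_nonneg[OF sq] tlr_nonneg[OF s']] by simp
    show ?thesis
    proof (intro exI allI impI)
      fix x assume x: "x \<in> l2" and x1: "l2norm x \<le> 1"
      have yeq: "(\<lambda>m. poly_shift a c n x m) = (\<lambda>m. poly_shift a c' m x m)"
        unfolding c'_def by (rule ext, rule p_trunc)
      have y: "(\<lambda>m. poly_shift a c n x m) \<in> l2" "l2norm (\<lambda>m. poly_shift a c n x m) \<le> C1 * l2norm x"
        unfolding yeq C1_def using LB[OF nz mono sq s' x] by auto
      have xn0: "0 \<le> l2norm x" by (rule l2norm_nonneg[OF x])
      have ly: "l2norm (\<lambda>m. poly_shift a c n x m) \<le> C1"
        using y(2) mult_left_mono[OF x1 C10] by simp
      have ly0: "0 \<le> l2norm (\<lambda>m. poly_shift a c n x m)" by (rule l2norm_nonneg[OF y(1)])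
      have lz: "l2norm (L x) \<le> \<bar>C\<bar>"
      proof -
        have "C * l2norm x \<le> \<bar>C\<bar> * l2norm x" using xn0 by (intro mult_right_mono) auto
        also have "\<dots> \<le> \<bar>C\<bar>" using mult_left_mono[OF x1, of "\<bar>C\<bar>"] by simp
        finally show ?thesis using C[OF x] by linarith
      qed
      have lz0: "0 \<le> l2norm (L x)" by (rule l2norm_nonneg[OF Ll2[OF x]])
      have "l2norm (\<lambda>m. poly_shift a c n x m - L x m)
          \<le> sqrt (2 * (l2norm (\<lambda>m. poly_shift a c n x m))\<^sup>2 + 2 * (l2norm (L x))\<^sup>2)"
        using l2_diff[OF y(1) Ll2[OF x]] by simp
      also have "\<dots> \<le> sqrt (2 * C1\<^sup>2 + 2 * \<bar>C\<bar>\<^sup>2)"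
        using power_mono[OF ly ly0, of 2] power_mono[OF lz lz0, of 2]
        by (intro real_sqrt_le_mono) linarith
      finally show "l2norm (\<lambda>m. poly_shift a c n x m - L x m) \<le> sqrt (2 * C1\<^sup>2 + 2 * \<bar>C\<bar>\<^sup>2)" .
    qed
  qed
  have dl2: "(\<lambda>m. poly_shift a c n e0 m - L e0 m) \<in> l2" for n
  proof -
    define c' where "c' = (\<lambda>k. if k \<le> n then c k else 0)"
    have s': "summable (\<lambda>k. (AA a c' (Suc k))\<^sup>2)"
      by (rule summable_finite[of "{..n}"]) (auto simp: AA_def c'_def)
    have yeq: "(\<lambda>m. poly_shift a c n e0 m) = (\<lambda>m. poly_shift a c' m e0 m)"
      unfolding c'_def by (rule ext, rule p_trunc)
    have "(\<lambda>m. poly_shift a c n e0 m) \<in> l2" unfolding yeq using LB[OF nz mono sq s' e0l2] by auto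
    then show ?thesis using l2_diff(1)[OF _ Ll2[OF e0l2]] by blast
  qed
  have le_op: "l2norm (\<lambda>m. poly_shift a c n e0 m - L e0 m)
      \<le> opnorm (\<lambda>x. (\<lambda>m. poly_shift a c n x m - L x m))" for n
  proof -
    obtain B where B: "\<And>x. x \<in> l2 \<Longrightarrow> l2norm x \<le> 1 \<Longrightarrow> l2norm (\<lambda>m. poly_shift a c n x m - L x m) \<le> B"
      using bnd[of n] by blast
    show ?thesis
      by (rule opnorm_ge[where A="\<lambda>x. (\<lambda>m. poly_shift a c n x m - L x m)", OF B e0l2]) (auto simp: e0n)
  qed
  have veq: "L e0 m = c m * (\<Prod>j<m. a j)" if m: "1 \<le> m" for m
  proof -
    have "cmod (c m * (\<Prod>j<m. a j) - L e0 m) \<le> 0"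
    proof (rule LIMSEQ_le_const[OF lim], intro exI allI impI)
      fix n assume n: "m \<le> n"
      have "cmod (c m * (\<Prod>j<m. a j) - L e0 m) = cmod (poly_shift a c n e0 m - L e0 m)"
        using m n by (simp add: e0_def p_e0)
      also have "\<dots> \<le> l2norm (\<lambda>m. poly_shift a c n e0 m - L e0 m)"
        using l2_coord[OF dl2[of n], of m] by simp
      also have "\<dots> \<le> opnorm (\<lambda>x. (\<lambda>m. poly_shift a c n x m - L x m))" by (rule le_op)
      finally show "cmod (c m * (\<Prod>j<m. a j) - L e0 m) \<le> opnorm (\<lambda>x. (\<lambda>m. poly_shift a c n x m - L x m))" .
    qed
    then show ?thesis by simp
  qed
  have "summable (\<lambda>m. (cmod (L e0 m))\<^sup>2)" using Ll2[OF e0l2] by (simp add: l2_def)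
  then have "summable (\<lambda>k. (cmod (L e0 (Suc k)))\<^sup>2)" by (subst summable_Suc_iff)
  moreover have "(cmod (L e0 (Suc k)))\<^sup>2 = (cmod (c (Suc k)))\<^sup>2 * (cmod (\<Prod>j\<le>k. a j))\<^sup>2" for k
  proof -
    have e: "L e0 (Suc k) = c (Suc k) * (\<Prod>j<Suc k. a j)" by (rule veq) simp
    show ?thesis unfolding e lessThan_Suc_atMost by (simp only: norm_mult power_mult_distrib)
  qed
  ultimately show "summable (\<lambda>k. (cmod (c (Suc k)))\<^sup>2 * (cmod (\<Prod>j\<le>k. a j))\<^sup>2)" by simp
next
  assume H: "summable (\<lambda>k. (cmod (c (Suc k)))\<^sup>2 * (cmod (\<Prod>j\<le>k. a j))\<^sup>2)"
  have "(\<lambda>k. (AA a c (Suc k))\<^sup>2) = (\<lambda>k. (cmod (c (Suc k)))\<^sup>2 * (cmod (\<Prod>j\<le>k. a j))\<^sup>2)"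
    unfolding AA_def lessThan_Suc_atMost power_mult_distrib by simp
  with H have s: "summable (\<lambda>k. (AA a c (Suc k))\<^sup>2)" by simp
  define L where "L = (\<lambda>x n. poly_shift a c n x n)"
  have bL: "bounded_op L"
    unfolding bounded_op_def
  proof (intro conjI ballI allI)
    fix x assume x: "x \<in> l2"
    show "L x \<in> l2" unfolding L_def using LB[OF nz mono sq s x] by blast
  next
    fix x y
    show "L (\<lambda>n. x n + y n) = (\<lambda>n. L x n + L y n)"
      unfolding L_def poly_shift_def by (simp add: wpow_add distrib_left sum.distrib)
  next
    fix x d
    show "L (\<lambda>n. d * x n) = (\<lambda>n. d * L x n)"
      unfolding L_def poly_shift_def by (simp add: wpow_scale sum_distrib_left mult_ac)
  next
    show "\<exists>C. \<forall>x\<in>l2. l2norm (L x) \<le> C * l2norm x"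
      unfolding L_def using LB(2)[OF nz mono sq s] by blast
  qed
  have bx: "l2norm (\<lambda>m. poly_shift a c n x m - L x m) \<le> sqrt (KK a * tlr a c n)"
    if x: "x \<in> l2" and x1: "l2norm x \<le> 1" for x n
  proof -
    have "l2norm (\<lambda>m. poly_shift a c n x m - L x m) \<le> sqrt (KK a * tlr a c n) * l2norm x"
      unfolding L_def using diff_l2(2)[OF nz mono sq s x] by simp
    also have "\<dots> \<le> sqrt (KK a * tlr a c n)"
      using mult_left_mono[OF x1, of "sqrt (KK a * tlr a c n)"]
        mult_nonneg_nonneg[OF KK_nonneg[OF sq] tlr_nonneg[OF s]] by simp
    finally show ?thesis .
  qed
  have up: "opnorm (\<lambda>x. (\<lambda>m. poly_shift a c n x m - L x m)) \<le> sqrt (KK a * tlr a c n)" for n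
    by (rule opnorm_le) (rule bx)
  have lo: "0 \<le> opnorm (\<lambda>x. (\<lambda>m. poly_shift a c n x m - L x m))" for n
  proof -
    have z: "(\<lambda>n. 0) \<in> l2" by (simp add: l2_def)
    have "l2norm (\<lambda>m. poly_shift a c n (\<lambda>n. 0) m - L (\<lambda>n. 0) m) \<le> opnorm (\<lambda>x. (\<lambda>m. poly_shift a c n x m - L x m))"
    proof (rule opnorm_ge[OF _ z])
      fix x assume x: "x \<in> l2" and x1: "l2norm x \<le> 1"
      show "l2norm (\<lambda>m. poly_shift a c n x m - L x m) \<le> sqrt (KK a * tlr a c n)"
        by (rule bx[OF x x1])
    qed (simp add: l2norm_def)
    moreover have "0 \<le> l2norm (\<lambda>m. poly_shift a c n (\<lambda>n. 0) m - L (\<lambda>n. 0) m)"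
      unfolding L_def by (rule l2norm_nonneg[OF diff_l2(1)[OF nz mono sq s z]])
    ultimately show ?thesis by linarith
  qed
  have t: "(\<lambda>n. sqrt (KK a * tlr a c n)) \<longlonglongrightarrow> 0"
    using tendsto_real_sqrt[OF tendsto_mult_right_zero[OF tlr_lim[OF s], of "KK a"]] by simp
  have "(\<lambda>n. opnorm (\<lambda>x. (\<lambda>m. poly_shift a c n x m - L x m))) \<longlonglongrightarrow> 0"
    by (rule tendsto_sandwich[OF _ _ tendsto_const t]) (use lo up in auto)
  with bL show "\<exists>L. bounded_op L \<and> (\<lambda>n. opnorm (\<lambda>x. (\<lambda>m. poly_shift a c n x m - L x m))) \<longlonglongrightarrow> 0"
    by blast
qed

end
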